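(* Let $m\ge 1$, $n\ge 1$ and $N>2n$ be integers and let $T\ge 1$. For parameters $M_0,M_1,\dots,M_n\in\mathbb R^{m\times m}$ with $M_0=M_0^\top$, let $\mathbf M_N$ be the $mN\times mN$ matrix, viewed as an $N\times N$ array of $m\times m$ blocks indexed by $i,j\in\{1,\dots,N\}$, whose $(i,j)$ block equals $M_k$ if $i-j\equiv k \pmod N$ with $0\le k\le n$, equals $M_k^\top$ if $j-i\equiv k\pmod N$ with $1\le k\le n$, and equals $0$ otherwise. The parameters are admissible if $\mathbf M_N$ is positive definite, and then they define the Gaussian density $$p_{(M_0,\dots,M_n)}(y)=(2\pi)^{-mN/2}\det(\mathbf M_N)^{1/2}\exp\!\left(-\tfrac12 y^\top\mathbf M_N y\right),\qquad y\in\mathbb R^{mN}.$$ Let $y^{(1)},\dots,y^{(T)}\in\mathbb R^{mN}$ be observations, treated as independent samples from this density, and write $y^{(t)}=(y^{(t)}(1)^\top,\dots,y^{(t)}(N)^\top)^\top$ with $y^{(t)}(j)\in\mathbb R^m$. Define the sample covariances $$\hat\Sigma_k=\frac{1}{NT}\sum_{t=1}^T\sum_{j=1}^N y^{(t)}(j+k)\,y^{(t)}(j)^\top,\qquad k=0,1,\dots,n,$$ with time indices taken modulo $N$. Suppose $\hat{\boldsymbol\Sigma}_N$ is a solution of the block-circulant band extension problem with data $\hat\Sigma_0,\dots,\hat\Sigma_n$, i.e. $\hat{\boldsymbol\Sigma}_N$ is a symmetric positive definite $mN\times mN$ matrix whose $(i,j)$ block equals $\Sigma_{(i-j)\bmod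 N}$ for some matrices $\Sigma_0,\dots,\Sigma_{N-1}\in\mathbb R^{m\times m}$ with $\Sigma_k=\hat\Sigma_k$ for $k=0,\dots,n$, and such that $\hat{\boldsymbol\Sigma}_N^{-1}$ is block-circulant and banded of bandwidth $n$ (its $(i,j)$ block is zero whenever the cyclic distance $\min\{(i-j)\bmod N,(j-i)\bmod N\}$ exceeds $n$). Then the maximum likelihood estimates of $(M_0,M_1,\dots,M_n)$, i.e. the admissible parameters maximizing $\prod_{t=1}^T p_{(M_0,\dots,M_n)}(y^{(t)})$, are the nonzero blocks of $\hat{\boldsymbol\Sigma}_N^{-1}$: $\hat M_k$ is the $(k+1,1)$ block of $\hat{\boldsymbol\Sigma}_N^{-1}$, $k=0,\dots,n$.
   Context: This is the maximum likelihood identification problem for (Gaussian) AR-type stationary reciprocal models $\mathbf M_N\mathbf y=\mathbf e$ on the discrete circle $\mathbb Z_N$; the likelihood does not require the true data distribution to be Gaussian. A matrix is block-circulant if its $(i,j)$ block depends only on $(i-j)\bmod N$. *)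

theory Defs
  imports Complex_Main "Jordan_Normal_Form.Determinant"
begin

text \<open>Conventions: block indices i,j and in-block indices a,b are 0-based;
 an mN-vector/matrix entry r corresponds to block r div m, in-block index r mod m.\<close>

definition pos_def_mat :: "nat \<Rightarrow> real mat \<Rightarrow> bool" where
  "pos_def_mat d A \<longleftrightarrow> A \<in> carrier_mat d d \<and>
     (\<forall>x \<in> carrier_vec d. x \<noteq> 0\<^sub>v d \<longrightarrow> x \<bullet> (A *\<^sub>v x) > 0)"

definition recip_mat :: "nat \<Rightarrow> nat \<Rightarrow> nat \<Rightarrow> (nat \<Rightarrow> real mat) \<Rightarrow> real mat" where
  "recip_mat m N n M = mat (m*N) (m*N) (\<lambda>(r,c).
     let i = int (r div m); j = int (c div m); a = r mod m; b = c mod m in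
     if (i - j) mod int N \<le> int n then M (nat ((i - j) mod int N)) $$ (a, b)
     else if (j - i) mod int N \<le> int n then M (nat ((j - i) mod int N)) $$ (b, a)
     else 0)"

definition admissible :: "nat \<Rightarrow> nat \<Rightarrow> nat \<Rightarrow> (nat \<Rightarrow> real mat) \<Rightarrow> bool" where
  "admissible m N n M \<longleftrightarrow> (\<forall>k\<le>n. M k \<in> carrier_mat m m) \<and> transpose_mat (M 0) = M 0 \<and>
     pos_def_mat (m*N) (recip_mat m N n M)"

definition gauss_density :: "nat \<Rightarrow> nat \<Rightarrow> nat \<Rightarrow> (nat \<Rightarrow> real mat) \<Rightarrow> real vec \<Rightarrow> real" where
  "gauss_density m N n M y =
     (2 * pi) powr (- real (m*N) / 2) * sqrt (det (recip_mat m N n M))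
       * exp (- (1/2) * (y \<bullet> (recip_mat m N n M *\<^sub>v y)))"

definition likelihood :: "nat \<Rightarrow> nat \<Rightarrow> nat \<Rightarrow> nat \<Rightarrow> (nat \<Rightarrow> real vec) \<Rightarrow> (nat \<Rightarrow> real mat) \<Rightarrow> real" where
  "likelihood m N n T y M = (\<Prod>t<T. gauss_density m N n M (y t))"

definition sample_cov :: "nat \<Rightarrow> nat \<Rightarrow> nat \<Rightarrow> (nat \<Rightarrow> real vec) \<Rightarrow> nat \<Rightarrow> real mat" where
  "sample_cov m N T y k = mat m m (\<lambda>(a,b).
     (1 / (real N * real T)) * (\<Sum>t<T. \<Sum>j<N. y t $ (((j + k) mod N) * m + a) * y t $ (j * m + b)))"

definition block_circulant :: "nat \<Rightarrow> nat \<Rightarrow> (nat \<Rightarrow> real mat) \<Rightarrow> real mat \<Rightarrow> bool" where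
  "block_circulant m N S A \<longleftrightarrow> A \<in> carrier_mat (m*N) (m*N) \<and>
     (\<forall>r < m*N. \<forall>c < m*N.
        A $$ (r,c) = S ((r div m + N - c div m) mod N) $$ (r mod m, c mod m))"

definition cyc_dist :: "nat \<Rightarrow> nat \<Rightarrow> nat \<Rightarrow> nat" where
  "cyc_dist N i j = min ((i + N - j) mod N) ((j + N - i) mod N)"

definition banded :: "nat \<Rightarrow> nat \<Rightarrow> nat \<Rightarrow> real mat \<Rightarrow> bool" where
  "banded m N n A \<longleftrightarrow> (\<forall>r < m*N. \<forall>c < m*N. cyc_dist N (r div m) (c div m) > n \<longrightarrow> A $$ (r,c) = 0)"

definition band_ext_solution :: "nat \<Rightarrow> nat \<Rightarrow> nat \<Rightarrow> (nat \<Rightarrow> real mat) \<Rightarrow> real mat \<Rightarrow> real mat \<Rightarrow> bool" where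
  "band_ext_solution m N n Shat Sig Sinv \<longleftrightarrow>
     transpose_mat Sig = Sig \<and> pos_def_mat (m*N) Sig \<and>
     (\<exists>S. (\<forall>k<N. S k \<in> carrier_mat m m) \<and> (\<forall>k\<le>n. S k = Shat k) \<and> block_circulant m N S Sig) \<and>
     Sinv \<in> carrier_mat (m*N) (m*N) \<and> Sig * Sinv = 1\<^sub>m (m*N) \<and>
     (\<exists>Q. block_circulant m N Q Sinv) \<and> banded m N n Sinv"

text \<open>(k+1,1) block (1-based) of a matrix, i.e. rows k*m.., columns 0..m-1.\<close>
definition block_of :: "nat \<Rightarrow> real mat \<Rightarrow> nat \<Rightarrow> real mat" where
  "block_of m A k = mat m m (\<lambda>(a,b). A $$ (k*m + a, b))"

end

theory Submission
  imports Defs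
begin


lemma qf:
  fixes A :: "real mat"
  assumes "A \<in> carrier_mat d d" "x \<in> carrier_vec d"
  shows "x \<bullet> (A *\<^sub>v x) = (\<Sum>i<d. \<Sum>j<d. x$i * A$$(i,j) * x$j)"
  using assms by (auto simp: scalar_prod_def sum_distrib_left atLeast0LessThan row_def mult.commute mult.left_commute intro!: sum.cong)

lemma sum_lessThan_mult_split:
  fixes f :: "nat \<Rightarrow> 'a::comm_monoid_add"
  shows "(\<Sum>r<m*N. f r) = (\<Sum>i<N. \<Sum>a<m. f (i*m+a))"
proof (induction N)
  case 0 then show ?case by simp
next
  case (Suc N)
  have "{..<m*Suc N} = {..<m*N} \<union> {m*N..<m*N+m}" by auto
  then have "(\<Sum>r<m*Suc N. f r) = (\<Sum>r<m*N. f r) + (\<Sum>r\<in>{m*N..<m*N+m}. f r)"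
    by (simp add: sum.union_disjoint ivl_disj_int)
  also have "(\<Sum>r\<in>{m*N..<m*N+m}. f r) = (\<Sum>a<m. f (N*m+a))"
    by (subst sum.atLeastLessThan_shift_0) (simp add: atLeast0LessThan mult.commute add.commute)
  finally show ?case using Suc by simp
qed

lemma mod_shift_aux:
  fixes N a k :: nat
  assumes "N > 0"
  shows "(a + k + (N - k mod N)) mod N = a mod N"
proof -
  have r: "k mod N < N" using assms by simp
  have q: "k div N * N + k mod N = k" by (rule div_mult_mod_eq)
  have "N * (k div N + 1) = k div N * N + N" by (simp add: algebra_simps)
  then have "k + (N - k mod N) = N * (k div N + 1)"
    using r q by linarith
  then have "a + k + (N - k mod N) = a + N * (k div N + 1)" by (simp add: add.assoc)
  then show ?thesis by (metis mod_mult_self2)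
qed

lemma sum_mod_shift:
  fixes g :: "nat \<Rightarrow> 'a::comm_monoid_add"
  assumes "N > 0"
  shows "(\<Sum>j<N. g ((j+k) mod N)) = (\<Sum>j<N. g j)"
proof (rule sum.reindex_bij_witness[where i="\<lambda>j. (j + (N - k mod N)) mod N" and j="\<lambda>j. (j+k) mod N"])
  fix a assume a: "a \<in> {..<N}"
  have "((a + k) mod N + (N - k mod N)) mod N = (a + k + (N - k mod N)) mod N"
    by (simp add: mod_add_left_eq)
  also have "\<dots> = a mod N" by (rule mod_shift_aux[OF assms])
  finally show "((a + k) mod N + (N - k mod N)) mod N = a"
    using a by simp
  show "(a + k) mod N \<in> {..<N}" using assms by simp
next
  fix b assume b: "b \<in> {..<N}"
  have "((b + (N - k mod N)) mod N + k) mod N = (b + k + (N - k mod N)) mod N"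
    by (metis mod_add_left_eq add.commute add.left_commute)
  also have "\<dots> = b mod N" by (rule mod_shift_aux[OF assms])
  finally show "((b + (N - k mod N)) mod N + k) mod N = b"
    using b by simp
  show "(b + (N - k mod N)) mod N \<in> {..<N}" using assms by simp
qed simp



lemma tTU:
  fixes U :: "real mat"
  assumes "U \<in> carrier_mat d d" "i < d" "j < d"
  shows "(transpose_mat U * U) $$ (i,j) = (\<Sum>k<d. U$$(k,i) * U$$(k,j))"
  using assms by (auto simp: scalar_prod_def atLeast0LessThan col_def row_def intro!: sum.cong)

lemma qf_split:
  fixes S :: "real mat" and z :: "real vec"
  shows "(\<Sum>i<Suc d. \<Sum>j<Suc d. z$i * S$$(i,j) * z$j) =
     z$0 * S$$(0,0) * z$0 + (\<Sum>j<d. z$0 * S$$(0,Suc j) * z$(Suc j))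
     + (\<Sum>i<d. z$(Suc i) * S$$(Suc i,0) * z$0)
     + (\<Sum>i<d. \<Sum>j<d. z$(Suc i) * S$$(Suc i,Suc j) * z$(Suc j))"
  by (simp only: sum.lessThan_Suc_shift sum.distrib add.assoc)


lemma pd_qf:
  fixes S :: "real mat"
  assumes "pos_def_mat d S" "x \<in> carrier_vec d" "x \<noteq> 0\<^sub>v d"
  shows "(\<Sum>i<d. \<Sum>j<d. x$i * S$$(i,j) * x$j) > 0"
  using assms qf[of S d x] unfolding pos_def_mat_def by auto

lemma chol:
  fixes S :: "real mat"
  shows "S \<in> carrier_mat d d \<Longrightarrow> transpose_mat S = S \<Longrightarrow> pos_def_mat d S \<Longrightarrow>
     \<exists>U \<in> carrier_mat d d. upper_triangular U \<and> S = transpose_mat U * U"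
proof (induction d arbitrary: S)
  case 0
  then show ?case
    by (intro bexI[of _ "1\<^sub>m 0"]) (auto intro!: eq_matI simp: upper_triangular_def)
next
  case (Suc d)
  have Sc: "S \<in> carrier_mat (Suc d) (Suc d)" by fact
  have sym: "S$$(i,j) = S$$(j,i)" if "i < Suc d" "j < Suc d" for i j
    using Suc.prems(2) that Sc by (metis carrier_matD index_transpose_mat(1))
  define s where "s = S$$(0,0)"
  have s_pos: "s > 0"
  proof -
    define e where "e = vec (Suc d) (\<lambda>i. if i = 0 then 1 else 0 :: real)"
    have e: "e \<in> carrier_vec (Suc d)" "e \<noteq> 0\<^sub>v (Suc d)"
      unfolding e_def by (auto dest!: arg_cong[where f="\<lambda>v. v$0"])
    have "(\<Sum>i<Suc d. \<Sum>j<Suc d. e$i * S$$(i,j) * e$j) > 0"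
      using pd_qf[OF Suc.prems(3) e] .
    also have "(\<Sum>i<Suc d. \<Sum>j<Suc d. e$i * S$$(i,j) * e$j) = s"
      unfolding qf_split by (simp add: e_def s_def)
    finally show ?thesis .
  qed
  define S2 where "S2 = mat d d (\<lambda>(i,j). S$$(Suc i, Suc j) - S$$(Suc i, 0) * S$$(0, Suc j) / s)"
  have S2c: "S2 \<in> carrier_mat d d" unfolding S2_def by simp
  have S2sym: "transpose_mat S2 = S2"
    unfolding S2_def by (rule eq_matI) (auto simp: sym)
  have S2pd: "pos_def_mat d S2"
    unfolding pos_def_mat_def
  proof (intro conjI S2c ballI impI)
    fix x :: "real vec" assume x: "x \<in> carrier_vec d" "x \<noteq> 0\<^sub>v d"
    define \<beta> where "\<beta> = (\<Sum>j<d. S$$(0,Suc j) * x$j)"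
    define z where "z = vec (Suc d) (\<lambda>i. if i = 0 then - \<beta> / s else x$(i - 1))"
    have zc: "z \<in> carrier_vec (Suc d)" unfolding z_def by simp
    have z0: "z \<noteq> 0\<^sub>v (Suc d)"
    proof
      assume "z = 0\<^sub>v (Suc d)"
      then have "x$i = 0" if "i < d" for i
      proof -
        have "z $ Suc i = 0" using that \<open>z = 0\<^sub>v (Suc d)\<close> by simp
        then show ?thesis using that unfolding z_def by simp
      qed
      then have "x = 0\<^sub>v d" using x(1) by (intro eq_vecI) auto
      then show False using x(2) by simp
    qed
    define Q where "Q = (\<Sum>i<d. \<Sum>j<d. x$i * S$$(Suc i,Suc j) * x$j)"
    have b2: "(\<Sum>i<d. x$i * S$$(Suc i,0)) = \<beta>"
      unfolding \<beta>_def by (auto intro!: sum.cong simp: sym)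
    have "(\<Sum>i<Suc d. \<Sum>j<Suc d. z$i * S$$(i,j) * z$j) =
       (-\<beta>/s) * s * (-\<beta>/s) + (-\<beta>/s) * \<beta> + \<beta> * (-\<beta>/s) + Q"
    proof -
      have t2: "(\<Sum>j<d. z$0 * S$$(0,Suc j) * z$(Suc j)) = (-\<beta>/s) * \<beta>"
      proof -
        have "(\<Sum>j<d. z$0 * S$$(0,Suc j) * z$(Suc j)) = (\<Sum>j<d. (-\<beta>/s) * (S$$(0,Suc j) * x$j))"
          by (auto simp: z_def intro!: sum.cong)
        also have "\<dots> = (-\<beta>/s) * \<beta>" unfolding sum_distrib_left[symmetric] \<beta>_def ..
        finally show ?thesis .
      qed
      have t3: "(\<Sum>i<d. z$(Suc i) * S$$(Suc i,0) * z$0) = \<beta> * (-\<beta>/s)"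
      proof -
        have "(\<Sum>i<d. z$(Suc i) * S$$(Suc i,0) * z$0) = (\<Sum>i<d. (x$i * S$$(Suc i,0)) * (-\<beta>/s))"
          by (auto simp: z_def intro!: sum.cong)
        also have "\<dots> = \<beta> * (-\<beta>/s)" unfolding sum_distrib_right[symmetric] b2 ..
        finally show ?thesis .
      qed
      have t4: "(\<Sum>i<d. \<Sum>j<d. z$(Suc i) * S$$(Suc i,Suc j) * z$(Suc j)) = Q"
        unfolding Q_def by (auto simp: z_def intro!: sum.cong)
      show ?thesis unfolding qf_split t2 t3 t4 by (simp add: z_def s_def)
    qed
    also have "\<dots> = Q - \<beta>*\<beta>/s" using s_pos by (simp add: field_simps)
    finally have 1: "(\<Sum>i<Suc d. \<Sum>j<Suc d. z$i * S$$(i,j) * z$j) = Q - \<beta>*\<beta>/s" .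
    have "(\<Sum>i<d. \<Sum>j<d. x$i * S2$$(i,j) * x$j) =
        (\<Sum>i<d. \<Sum>j<d. x$i * S$$(Suc i,Suc j) * x$j - (x$i * S$$(Suc i, 0)) * (S$$(0, Suc j) * x$j) / s)"
      unfolding S2_def by (auto intro!: sum.cong simp: algebra_simps diff_divide_distrib)
    also have "\<dots> = Q - (\<Sum>i<d. x$i * S$$(Suc i, 0)) * (\<Sum>j<d. S$$(0, Suc j) * x$j) / s"
      unfolding Q_def sum_subtractf sum_divide_distrib[symmetric] sum_product by simp
    also have "\<dots> = Q - \<beta>*\<beta>/s" unfolding b2 \<beta>_def by simp
    finally have 2: "(\<Sum>i<d. \<Sum>j<d. x$i * S2$$(i,j) * x$j) = Q - \<beta>*\<beta>/s" .
    have "(\<Sum>i<Suc d. \<Sum>j<Suc d. z$i * S$$(i,j) * z$j) > 0"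
      using pd_qf[OF Suc.prems(3) zc z0] .
    then show "x \<bullet> (S2 *\<^sub>v x) > 0" using 1 2 qf[OF S2c x(1)] by simp
  qed
  obtain U' where U': "U' \<in> carrier_mat d d" "upper_triangular U'" "S2 = transpose_mat U' * U'"
    using Suc.IH[OF S2c S2sym S2pd] by blast
  define U where "U = mat (Suc d) (Suc d) (\<lambda>(i,j). if i = 0 then (if j = 0 then sqrt s else S$$(0,j) / sqrt s)
       else if j = 0 then 0 else U'$$(i - 1, j - 1))"
  have Uc: "U \<in> carrier_mat (Suc d) (Suc d)" unfolding U_def by simp
  have Uup: "upper_triangular U"
    unfolding upper_triangular_def U_def using U'(1,2) by (auto simp: upper_triangular_def)
  have ss: "sqrt s * sqrt s = s" using s_pos by simp
  have "S = transpose_mat U * U"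
  proof (rule eq_matI)
    fix i j assume ij: "i < dim_row (transpose_mat U * U)" "j < dim_col (transpose_mat U * U)"
    then have i: "i < Suc d" and j: "j < Suc d" using Uc by auto
    have e: "(transpose_mat U * U) $$ (i,j) = U$$(0,i) * U$$(0,j) + (\<Sum>k<d. U$$(Suc k,i) * U$$(Suc k,j))"
      unfolding tTU[OF Uc i j] by (simp only: sum.lessThan_Suc_shift)
    show "S $$ (i,j) = (transpose_mat U * U) $$ (i,j)"
    proof (cases i)
      case 0
      then show ?thesis
      proof (cases j)
        case 0 then show ?thesis using \<open>i = 0\<close> e s_pos by (simp add: U_def ss s_def)
      next
        case (Suc j')
        then show ?thesis using \<open>i = 0\<close> e j s_pos by (simp add: U_def)
      qed
    next
      case (Suc i')
      then show ?thesis
      proof (cases j)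
        case 0 then show ?thesis using \<open>i = Suc i'\<close> e i s_pos by (simp add: U_def sym)
      next
        case (Suc j')
        have "(\<Sum>k<d. U$$(Suc k,i) * U$$(Suc k,j)) = (\<Sum>k<d. U'$$(k,i') * U'$$(k,j'))"
          using i j \<open>i = Suc i'\<close> Suc by (auto simp: U_def intro!: sum.cong)
        also have "\<dots> = S2 $$ (i',j')" using U' tTU[OF U'(1), of i' j'] i j \<open>i = Suc i'\<close> Suc by simp
        also have "\<dots> = S$$(i,j) - S$$(0,i) * S$$(0,j) / s"
          using i j \<open>i = Suc i'\<close> Suc by (simp add: S2_def sym)
        finally show ?thesis using e i j \<open>i = Suc i'\<close> Suc s_pos
          by (simp add: U_def field_simps)
      qed
    qed
  qed (use Uc Sc in auto)
  then show ?case using Uc Uup by blast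
qed



lemma pd_det_nonzero:
  fixes A :: "real mat"
  assumes "pos_def_mat d A"
  shows "det A \<noteq> 0"
proof
  assume "det A = 0"
  have Ac: "A \<in> carrier_mat d d" using assms unfolding pos_def_mat_def by auto
  obtain v where v: "v \<in> carrier_vec d" "v \<noteq> 0\<^sub>v d" "A *\<^sub>v v = 0\<^sub>v d"
    using det_0_iff_vec_prod_zero[OF Ac] \<open>det A = 0\<close> by auto
  have "v \<bullet> (A *\<^sub>v v) > 0" using assms v unfolding pos_def_mat_def by auto
  moreover have "v \<bullet> (A *\<^sub>v v) = 0" using v by simp
  ultimately show False by simp
qed

lemma det_upper_prod:
  fixes U :: "real mat"
  assumes "U \<in> carrier_mat d d" "upper_triangular U"
  shows "det U = (\<Prod>i<d. U$$(i,i))"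
proof -
  have "det U = prod_list (diag_mat U)" by (rule det_upper_triangular[OF assms(2,1)])
  also have "diag_mat U = map (\<lambda>i. U$$(i,i)) [0..<d]" using assms(1) by (simp add: diag_mat_def)
  also have "prod_list (map (\<lambda>i. U$$(i,i)) [0..<d]) = (\<Prod>i<d. U$$(i,i))"
    by (subst prod.distinct_set_conv_list[symmetric]) (auto simp: atLeast0LessThan)
  finally show ?thesis .
qed

lemma mult_entry:
  fixes U A :: "real mat"
  assumes "U \<in> carrier_mat d e" "A \<in> carrier_mat e f" "i < d" "j < f"
  shows "(U * A) $$ (i,j) = (\<Sum>p<e. U$$(i,p) * A$$(p,j))"
  using assms by (simp add: index_mult_mat(1) scalar_prod_def atLeast0LessThan)

lemma triple_entry:
  fixes U A :: "real mat"
  assumes "U \<in> carrier_mat d d" "A \<in> carrier_mat d d" "i < d" "j < d"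
  shows "(U * A * transpose_mat U) $$ (i,j) = (\<Sum>p<d. \<Sum>q<d. A$$(p,q) * (U$$(i,p) * U$$(j,q)))"
proof -
  have UA: "U * A \<in> carrier_mat d d" using assms by simp
  have "(U * A * transpose_mat U) $$ (i,j) = (\<Sum>q<d. (U * A)$$(i,q) * transpose_mat U $$ (q,j))"
    by (rule mult_entry[OF UA _ assms(3,4)]) (use assms in simp)
  also have "\<dots> = (\<Sum>q<d. (\<Sum>p<d. U$$(i,p) * A$$(p,q)) * U$$(j,q))"
    using assms by (intro sum.cong refl) (simp del: index_mult_mat add: mult_entry[OF assms(1,2)])
  also have "\<dots> = (\<Sum>q<d. \<Sum>p<d. A$$(p,q) * (U$$(i,p) * U$$(j,q)))"
    unfolding sum_distrib_right by (intro sum.cong refl) (simp add: mult_ac)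
  also have "\<dots> = (\<Sum>p<d. \<Sum>q<d. A$$(p,q) * (U$$(i,p) * U$$(j,q)))"
    by (rule sum.swap)
  finally show ?thesis .
qed

lemma key:
  fixes A S :: "real mat"
  assumes Ac: "A \<in> carrier_mat d d" and Sc: "S \<in> carrier_mat d d"
    and As: "transpose_mat A = A" and Ss: "transpose_mat S = S"
    and Ap: "pos_def_mat d A" and Sp: "pos_def_mat d S"
  shows "det A * det S \<le> exp ((\<Sum>i<d. \<Sum>j<d. A$$(i,j) * S$$(i,j)) - real d)
     \<and> (det A * det S = exp ((\<Sum>i<d. \<Sum>j<d. A$$(i,j) * S$$(i,j)) - real d) \<longrightarrow> A * S = 1\<^sub>m d)"
proof -
  define \<tau> where "\<tau> = (\<Sum>i<d. \<Sum>j<d. A$$(i,j) * S$$(i,j))"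
  obtain U where Uc: "U \<in> carrier_mat d d" and Uu: "upper_triangular U" and SU: "S = transpose_mat U * U"
    using chol[OF Sc Ss Sp] by blast
  have UTc: "transpose_mat U \<in> carrier_mat d d" using Uc by simp
  have detS: "det S = det U * det U"
    unfolding SU using det_mult[OF UTc Uc] det_transpose[OF Uc] by simp
  have dU: "det U \<noteq> 0" using pd_det_nonzero[OF Sp] detS by auto
  have dUT: "det (transpose_mat U) \<noteq> 0" using dU det_transpose[OF Uc] by simp
  define X where "X = U * A * transpose_mat U"
  have Xc: "X \<in> carrier_mat d d" unfolding X_def using Uc Ac by auto
  have Xs: "transpose_mat X = X"
  proof -
    have "transpose_mat X = transpose_mat (transpose_mat U) * transpose_mat (U * A)"
      unfolding X_def by (rule transpose_mult[of "U * A" d d "transpose_mat U" d]) (use Uc Ac in auto)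
    also have "transpose_mat (U * A) = transpose_mat A * transpose_mat U"
      by (rule transpose_mult[of U d d A d]) (use Uc Ac in auto)
    finally show ?thesis unfolding X_def As using Uc Ac
      by (simp add: assoc_mult_mat[of U d d A d "transpose_mat U" d])
  qed
  have Xp: "pos_def_mat d X"
    unfolding pos_def_mat_def
  proof (intro conjI Xc ballI impI)
    fix x :: "real vec" assume x: "x \<in> carrier_vec d" "x \<noteq> 0\<^sub>v d"
    define w where "w = transpose_mat U *\<^sub>v x"
    have wc: "w \<in> carrier_vec d" unfolding w_def using Uc x by simp
    have w0: "w \<noteq> 0\<^sub>v d"
    proof
      assume "w = 0\<^sub>v d"
      then have "det (transpose_mat U) = 0"
        using det_0_iff_vec_prod_zero[OF UTc] x unfolding w_def by auto
      then show False using dUT by simp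
    qed
    have "x \<bullet> (X *\<^sub>v x) = x \<bullet> (U *\<^sub>v (A *\<^sub>v w))"
      unfolding X_def w_def using Uc Ac x by (simp add: assoc_mult_mat_vec[of _ d d _ d])
    also have "\<dots> = w \<bullet> (A *\<^sub>v w)"
      using transpose_vec_mult_scalar[OF Uc, of "A *\<^sub>v w" x] Ac wc x unfolding w_def by simp
    finally show "x \<bullet> (X *\<^sub>v x) > 0" using Ap wc w0 unfolding pos_def_mat_def by simp
  qed
  obtain K where Kc: "K \<in> carrier_mat d d" and Ku: "upper_triangular K" and XK: "X = transpose_mat K * K"
    using chol[OF Xc Xs Xp] by blast
  have detX1: "det X = det A * det S"
  proof -
    have "det X = det (U*A) * det (transpose_mat U)" unfolding X_def by (rule det_mult) (use Uc Ac in auto)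
    also have "det (U*A) = det U * det A" by (rule det_mult[OF Uc Ac])
    also have "det (transpose_mat U) = det U" by (rule det_transpose[OF Uc])
    finally show ?thesis unfolding detS by (simp add: mult_ac)
  qed
  have detX2: "det X = (\<Prod>i<d. (K$$(i,i))^2)"
  proof -
    have "det X = det (transpose_mat K) * det K" unfolding XK by (rule det_mult) (use Kc in auto)
    also have "det (transpose_mat K) = det K" by (rule det_transpose[OF Kc])
    also have "det K = (\<Prod>i<d. K$$(i,i))" by (rule det_upper_prod[OF Kc Ku])
    finally show ?thesis by (simp add: power2_eq_square prod.distrib)
  qed
  have Xdiag: "X $$ (i,i) = (\<Sum>k<d. (K$$(k,i))^2)" if "i < d" for i
    unfolding XK using tTU[OF Kc that that] by (simp add: power2_eq_square)
  have tr: "(\<Sum>i<d. X $$ (i,i)) = \<tau>"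
  proof -
    have "(\<Sum>i<d. X $$ (i,i)) = (\<Sum>i<d. \<Sum>p<d. \<Sum>q<d. A$$(p,q) * (U$$(i,p) * U$$(i,q)))"
      unfolding X_def using triple_entry[OF Uc Ac] by (auto intro!: sum.cong)
    also have "\<dots> = (\<Sum>p<d. \<Sum>i<d. \<Sum>q<d. A$$(p,q) * (U$$(i,p) * U$$(i,q)))"
      by (rule sum.swap)
    also have "\<dots> = (\<Sum>p<d. \<Sum>q<d. \<Sum>i<d. A$$(p,q) * (U$$(i,p) * U$$(i,q)))"
      by (rule sum.cong[OF refl], rule sum.swap)
    also have "\<dots> = (\<Sum>p<d. \<Sum>q<d. A$$(p,q) * S$$(p,q))"
      unfolding SU using tTU[OF Uc] by (auto intro!: sum.cong simp: sum_distrib_left)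
    also have "\<dots> = \<tau>" unfolding \<tau>_def ..
    finally show ?thesis .
  qed
  have Kd: "K$$(i,i) \<noteq> 0" if "i < d" for i
    using pd_det_nonzero[OF Xp] detX2 that by auto
  have Kpos: "(K$$(i,i))^2 > 0" if "i < d" for i using Kd[OF that] by simp
  have "0 < (\<Prod>i<d. (K$$(i,i))^2)" by (rule prod_pos) (use Kpos in auto)
  then have P: "det A * det S > 0" using detX1 detX2 by simp
  have L: "ln (det A * det S) = (\<Sum>i<d. ln ((K$$(i,i))^2))"
    unfolding detX1[symmetric] detX2 by (rule ln_prod) (use Kpos in auto)
  have I1: "\<forall>i\<in>{..<d}. ln ((K$$(i,i))^2) \<le> (K$$(i,i))^2 - 1"
    using Kpos ln_le_minus_one by auto
  have I2: "\<forall>i\<in>{..<d}. (K$$(i,i))^2 \<le> (\<Sum>k<d. (K$$(k,i))^2)"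
    by (auto intro!: member_le_sum)
  have s1: "(\<Sum>i<d. (K$$(i,i))^2 - 1) = (\<Sum>i<d. (K$$(i,i))^2) - real d"
    by (simp add: sum_subtractf)
  have tauK: "\<tau> = (\<Sum>i<d. \<Sum>k<d. (K$$(k,i))^2)" using tr Xdiag by simp
  have le1: "(\<Sum>i<d. ln ((K$$(i,i))^2)) \<le> (\<Sum>i<d. (K$$(i,i))^2 - 1)"
    using I1 by (intro sum_mono) auto
  have le2: "(\<Sum>i<d. (K$$(i,i))^2) \<le> (\<Sum>i<d. \<Sum>k<d. (K$$(k,i))^2)"
    using I2 by (intro sum_mono) auto
  have lnle: "ln (det A * det S) \<le> \<tau> - real d"
    using L le1 le2 s1 tauK by linarith
  have part1: "det A * det S \<le> exp (\<tau> - real d)"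
  proof -
    have "det A * det S = exp (ln (det A * det S))" using P by simp
    also have "\<dots> \<le> exp (\<tau> - real d)" using lnle by simp
    finally show ?thesis .
  qed
  have part2: "A * S = 1\<^sub>m d" if eq: "det A * det S = exp (\<tau> - real d)"
  proof -
    have lneq: "ln (det A * det S) = \<tau> - real d" using eq by simp
    have e1: "(\<Sum>i<d. ln ((K$$(i,i))^2)) = (\<Sum>i<d. (K$$(i,i))^2 - 1)"
      using lneq L le1 le2 s1 tauK by linarith
    have e2: "(\<Sum>i<d. (K$$(i,i))^2) = (\<Sum>i<d. \<Sum>k<d. (K$$(k,i))^2)"
      using lneq L le1 le2 s1 tauK by linarith
    have one: "(K$$(i,i))^2 = 1" if "i < d" for i
    proof (rule ccontr)
      assume ne: "(K$$(i,i))^2 \<noteq> 1"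
      have "ln ((K$$(i,i))^2) < (K$$(i,i))^2 - 1"
        using ln_le_minus_one[OF Kpos[OF that]] ln_eq_minus_one[OF Kpos[OF that]] ne by force
      then have "(\<Sum>i<d. ln ((K$$(i,i))^2)) < (\<Sum>i<d. (K$$(i,i))^2 - 1)"
        using I1 that by (intro sum_strict_mono_ex1) auto
      then show False using e1 by simp
    qed
    have off: "K$$(k,i) = 0" if "i < d" "k < d" "k \<noteq> i" for i k
    proof (rule ccontr)
      assume ne: "K$$(k,i) \<noteq> 0"
      have "(\<Sum>k<d. (K$$(k,i))^2) = (K$$(i,i))^2 + (\<Sum>k\<in>{..<d}-{i}. (K$$(k,i))^2)"
        using that by (simp add: sum.remove)
      moreover have "(\<Sum>k\<in>{..<d}-{i}. (K$$(k,i))^2) > 0"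
      proof -
        have "(\<Sum>k\<in>{..<d}-{i}. (K$$(k,i))^2) \<noteq> 0"
          using ne that by (subst sum_nonneg_eq_0_iff) auto
        moreover have "(\<Sum>k\<in>{..<d}-{i}. (K$$(k,i))^2) \<ge> 0" by (simp add: sum_nonneg)
        ultimately show ?thesis by linarith
      qed
      ultimately have "(K$$(i,i))^2 < (\<Sum>k<d. (K$$(k,i))^2)" by linarith
      then have "(\<Sum>i<d. (K$$(i,i))^2) < (\<Sum>i<d. \<Sum>k<d. (K$$(k,i))^2)"
        using I2 that by (intro sum_strict_mono_ex1) auto
      then show False using e2 by simp
    qed
    have X1: "X = 1\<^sub>m d"
    proof (rule eq_matI)
      fix i j assume "i < dim_row (1\<^sub>m d :: real mat)" "j < dim_col (1\<^sub>m d :: real mat)"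
      then have i: "i < d" and j: "j < d" by auto
      have "X $$ (i,j) = (\<Sum>k<d. K$$(k,i) * K$$(k,j))" unfolding XK by (rule tTU[OF Kc i j])
      also have "\<dots> = (if i = j then 1 else 0)"
      proof (cases "i = j")
        case True
        have "(\<Sum>k<d. K$$(k,i) * K$$(k,j)) = (\<Sum>k<d. if k = i then 1 else 0)"
          using True one off i by (intro sum.cong) (auto simp: power2_eq_square)
        then show ?thesis using True i by simp
      next
        case False
        have "(\<Sum>k<d. K$$(k,i) * K$$(k,j)) = (\<Sum>k<d. 0)"
          using False off i j by (intro sum.cong) auto
        then show ?thesis using False by simp
      qed
      finally show "X $$ (i,j) = 1\<^sub>m d $$ (i,j)" using i j by simp
    qed (use Xc in auto)
    have "U * (A * transpose_mat U) = 1\<^sub>m d" using X1 unfolding X_def using Uc Ac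
      by (simp add: assoc_mult_mat[of U d d A d "transpose_mat U" d])
    moreover have AU: "A * transpose_mat U \<in> carrier_mat d d" using Uc Ac by simp
    ultimately have "(A * transpose_mat U) * U = 1\<^sub>m d"
      using mat_mult_left_right_inverse[OF Uc AU] by blast
    then show ?thesis unfolding SU using Uc Ac
      by (simp add: assoc_mult_mat[of A d d "transpose_mat U" d U d])
  qed
  show ?thesis using part1 part2 unfolding \<tau>_def by blast
qed



lemma idx:
  fixes x a m N :: nat
  assumes "x < N" "a < m"
  shows "x*m + a < m*N" "(x*m+a) div m = x" "(x*m+a) mod m = a"
proof -
  have "x*m + a < x*m + m" using assms by simp
  also have "x*m + m = (x+1)*m" by simp
  also have "(x+1)*m \<le> N*m" using assms(1) by (intro mult_le_mono1) simp
  finally show "x*m + a < m*N" by (simp add: mult.commute)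
  show "(x*m+a) div m = x" "(x*m+a) mod m = a" using assms by auto
qed

lemma mod_back:
  fixes k j N :: nat
  assumes "k < N" "j < N"
  shows "((j + k) mod N + N - j) mod N = k"
proof -
  have "((j + k) mod N + N - j) mod N = ((j + k) mod N + (N - j)) mod N" using assms by simp
  also have "\<dots> = (j + k + (N - j)) mod N" by (simp add: mod_add_left_eq)
  also have "j + k + (N - j) = k + N" using assms by simp
  finally show ?thesis using assms by simp
qed

lemma circ_sum:
  fixes A :: "real mat" and H :: "nat \<Rightarrow> nat \<Rightarrow> real" and f :: "nat \<Rightarrow> nat \<Rightarrow> nat \<Rightarrow> real"
  assumes N: "N > 0" and m: "m > 0"
    and circ: "\<And>r c. r < m*N \<Longrightarrow> c < m*N \<Longrightarrow> A$$(r,c) = f ((r div m + N - c div m) mod N) (r mod m) (c mod m)"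
  shows "(\<Sum>r<m*N. \<Sum>c<m*N. A$$(r,c) * H r c) =
     (\<Sum>k<N. \<Sum>a<m. \<Sum>b<m. f k a b * (\<Sum>j<N. H (((j+k) mod N)*m+a) (j*m+b)))"
proof -
  have "(\<Sum>r<m*N. \<Sum>c<m*N. A$$(r,c) * H r c) =
      (\<Sum>i<N. \<Sum>a<m. \<Sum>j<N. \<Sum>b<m. f ((i + N - j) mod N) a b * H (i*m+a) (j*m+b))"
  proof -
    have "(\<Sum>r<m*N. \<Sum>c<m*N. A$$(r,c) * H r c) = (\<Sum>i<N. \<Sum>a<m. \<Sum>j<N. \<Sum>b<m. A$$(i*m+a,j*m+b) * H (i*m+a) (j*m+b))"
      by (simp only: sum_lessThan_mult_split[of _ m N])
    also have "\<dots> = (\<Sum>i<N. \<Sum>a<m. \<Sum>j<N. \<Sum>b<m. f ((i + N - j) mod N) a b * H (i*m+a) (j*m+b))"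
    proof (intro sum.cong refl)
      fix i a j b assume "i \<in> {..<N}" "a \<in> {..<m}" "j \<in> {..<N}" "b \<in> {..<m}"
      then show "A$$(i*m+a,j*m+b) * H (i*m+a) (j*m+b) = f ((i + N - j) mod N) a b * H (i*m+a) (j*m+b)"
        by (simp add: circ idx)
    qed
    finally show ?thesis .
  qed
  also have "\<dots> = (\<Sum>i<N. \<Sum>j<N. \<Sum>a<m. \<Sum>b<m. f ((i + N - j) mod N) a b * H (i*m+a) (j*m+b))"
    by (rule sum.cong[OF refl], rule sum.swap)
  also have "\<dots> = (\<Sum>j<N. \<Sum>i<N. \<Sum>a<m. \<Sum>b<m. f ((i + N - j) mod N) a b * H (i*m+a) (j*m+b))"
    by (rule sum.swap)
  also have "\<dots> = (\<Sum>j<N. \<Sum>k<N. \<Sum>a<m. \<Sum>b<m. f k a b * H (((j+k) mod N)*m+a) (j*m+b))"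
  proof (rule sum.cong[OF refl])
    fix j assume j: "j \<in> {..<N}"
    have "(\<Sum>i<N. \<Sum>a<m. \<Sum>b<m. f ((i + N - j) mod N) a b * H (i*m+a) (j*m+b)) =
        (\<Sum>k<N. \<Sum>a<m. \<Sum>b<m. f (((k+j) mod N + N - j) mod N) a b * H (((k+j) mod N)*m+a) (j*m+b))"
      by (rule sum_mod_shift[OF N, symmetric])
    also have "\<dots> = (\<Sum>k<N. \<Sum>a<m. \<Sum>b<m. f k a b * H (((j+k) mod N)*m+a) (j*m+b))"
      using j mod_back by (intro sum.cong refl) (simp add: add.commute)
    finally show "(\<Sum>i<N. \<Sum>a<m. \<Sum>b<m. f ((i + N - j) mod N) a b * H (i*m+a) (j*m+b)) =
        (\<Sum>k<N. \<Sum>a<m. \<Sum>b<m. f k a b * H (((j+k) mod N)*m+a) (j*m+b))" .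
  qed
  also have "\<dots> = (\<Sum>k<N. \<Sum>j<N. \<Sum>a<m. \<Sum>b<m. f k a b * H (((j+k) mod N)*m+a) (j*m+b))"
    by (rule sum.swap)
  also have "\<dots> = (\<Sum>k<N. \<Sum>a<m. \<Sum>j<N. \<Sum>b<m. f k a b * H (((j+k) mod N)*m+a) (j*m+b))"
    by (rule sum.cong[OF refl], rule sum.swap)
  also have "\<dots> = (\<Sum>k<N. \<Sum>a<m. \<Sum>b<m. \<Sum>j<N. f k a b * H (((j+k) mod N)*m+a) (j*m+b))"
    by (rule sum.cong[OF refl], rule sum.cong[OF refl], rule sum.swap)
  also have "\<dots> = (\<Sum>k<N. \<Sum>a<m. \<Sum>b<m. f k a b * (\<Sum>j<N. H (((j+k) mod N)*m+a) (j*m+b)))"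
    by (simp add: sum_distrib_left)
  finally show ?thesis .
qed


lemma int_mod_nat:
  fixes i j N :: nat
  assumes "i < N" "j < N"
  shows "(int i - int j) mod int N = int ((i + N - j) mod N)"
proof -
  have "int ((i + N - j) mod N) = int (i + N - j) mod int N" by (simp add: zmod_int)
  also have "int (i + N - j) = (int i - int j) + int N" using assms by simp
  finally show ?thesis by simp
qed

lemma recip_circ:
  fixes M :: "nat \<Rightarrow> real mat"
  assumes m: "m > 0" and r: "r < m*N" and c: "c < m*N"
  shows "recip_mat m N n M $$ (r,c) =
    recip_mat m N n M $$ (((r div m + N - c div m) mod N) * m + r mod m, c mod m)"
proof -
  have N: "N > 0" using r by (cases N) auto
  define i where "i = r div m"
  define j where "j = c div m"
  define k where "k = (i + N - j) mod N"
  have i: "i < N" unfolding i_def using r m by (simp add: less_mult_imp_div_less mult.commute)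
  have j: "j < N" unfolding j_def using c m by (simp add: less_mult_imp_div_less mult.commute)
  have k: "k < N" unfolding k_def using N by simp
  have am: "r mod m < m" "c mod m < m" using m by auto
  have e1: "(int i - int j) mod int N = (int k - int 0) mod int N"
    unfolding int_mod_nat[OF i j] k_def by (simp add: zmod_int[symmetric])
  have e2: "(int j - int i) mod int N = (int 0 - int k) mod int N"
  proof -
    have "(int 0 - int k) mod int N = (- ((int i - int j) mod int N)) mod int N"
      using e1 k by simp
    also have "\<dots> = (- (int i - int j)) mod int N" by (rule mod_minus_eq)
    finally show ?thesis by simp
  qed
  have r2: "k*m + r mod m < m*N" "(k*m + r mod m) div m = k" "(k*m + r mod m) mod m = r mod m"
    using idx[OF k am(1)] by auto
  have c2: "c mod m < m*N" "(c mod m) div m = 0" "(c mod m) mod m = c mod m"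
    using am c N m by (auto intro: less_le_trans[of _ m] simp: mult_le_cancel1 nat_mult_le_cancel_disj)
  show ?thesis
    unfolding recip_mat_def using r c r2 c2 e1 e2
    by (simp add: Let_def i_def[symmetric] j_def[symmetric] k_def[symmetric])
qed


lemma quad_sum:
  fixes A :: "real mat"
  assumes A: "A \<in> carrier_mat d d" and y: "\<And>t. t < T \<Longrightarrow> y t \<in> carrier_vec d"
  shows "(\<Sum>t<T. y t \<bullet> (A *\<^sub>v y t)) = (\<Sum>r<d. \<Sum>c<d. A$$(r,c) * (\<Sum>t<T. y t $ r * y t $ c))"
proof -
  have "(\<Sum>t<T. y t \<bullet> (A *\<^sub>v y t)) = (\<Sum>t<T. \<Sum>r<d. \<Sum>c<d. y t $ r * A$$(r,c) * y t $ c)"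
    using qf[OF A y] by simp
  also have "\<dots> = (\<Sum>r<d. \<Sum>t<T. \<Sum>c<d. y t $ r * A$$(r,c) * y t $ c)" by (rule sum.swap)
  also have "\<dots> = (\<Sum>r<d. \<Sum>c<d. \<Sum>t<T. y t $ r * A$$(r,c) * y t $ c)"
    by (rule sum.cong[OF refl], rule sum.swap)
  also have "\<dots> = (\<Sum>r<d. \<Sum>c<d. A$$(r,c) * (\<Sum>t<T. y t $ r * y t $ c))"
    by (simp add: sum_distrib_left mult_ac)
  finally show ?thesis .
qed

lemma sig_inner:
  fixes Sig :: "real mat"
  assumes bc: "block_circulant m N S Sig" and k: "k < N" and a: "a < m" and b: "b < m"
  shows "(\<Sum>j<N. Sig$$(((j+k) mod N)*m+a, j*m+b)) = real N * S k $$ (a,b)"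
proof -
  have "(\<Sum>j<N. Sig$$(((j+k) mod N)*m+a, j*m+b)) = (\<Sum>j<N. S k $$ (a,b))"
  proof (rule sum.cong[OF refl])
    fix j assume j: "j \<in> {..<N}"
    have jk: "(j+k) mod N < N" using k by simp
    have r: "((j+k) mod N)*m+a < m*N" "(((j+k) mod N)*m+a) div m = (j+k) mod N"
        "(((j+k) mod N)*m+a) mod m = a" using idx[OF jk a] by auto
    have c: "j*m+b < m*N" "(j*m+b) div m = j" "(j*m+b) mod m = b" using idx[of j N b m] j b by auto
    show "Sig$$(((j+k) mod N)*m+a, j*m+b) = S k $$ (a,b)"
      using bc r c mod_back[OF k, of j] j unfolding block_circulant_def by auto
  qed
  then show ?thesis by simp
qed

lemma cov_inner:
  assumes N: "N > 0" and T: "T > 0" and a: "a < m" and b: "b < m"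
  shows "(\<Sum>j<N. \<Sum>t<T. y t $ (((j+k) mod N)*m+a) * y t $ (j*m+b)) = real N * real T * sample_cov m N T y k $$ (a,b)"
proof -
  have "real N * real T * sample_cov m N T y k $$ (a,b) = (\<Sum>t<T. \<Sum>j<N. y t $ (((j+k) mod N)*m+a) * y t $ (j*m+b))"
    unfolding sample_cov_def using a b N T by simp
  also have "\<dots> = (\<Sum>j<N. \<Sum>t<T. y t $ (((j+k) mod N)*m+a) * y t $ (j*m+b))" by (rule sum.swap)
  finally show ?thesis by simp
qed

lemma cov_sym:
  assumes N: "N > 0" and kk: "k + k' = N" and a: "a < m" and b: "b < m"
  shows "sample_cov m N T y k' $$ (b,a) = sample_cov m N T y k $$ (a,b)"
proof -
  have inner: "(\<Sum>j<N. y t $ (((j+k') mod N)*m+b) * y t $ (j*m+a)) = (\<Sum>j<N. y t $ (((j+k) mod N)*m+a) * y t $ (j*m+b))" for t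
  proof -
    have "(\<Sum>j<N. y t $ (((j+k') mod N)*m+b) * y t $ (j*m+a)) =
        (\<Sum>j<N. y t $ ((((j+k) mod N+k') mod N)*m+b) * y t $ (((j+k) mod N)*m+a))"
      by (rule sum_mod_shift[OF N, symmetric, of "\<lambda>j. y t $ (((j+k') mod N)*m+b) * y t $ (j*m+a)" k])
    also have "\<dots> = (\<Sum>j<N. y t $ (((j+k) mod N)*m+a) * y t $ (j*m+b))"
    proof (rule sum.cong[OF refl])
      fix j assume j: "j \<in> {..<N}"
      have "((j+k) mod N+k') mod N = (j + k + k') mod N" by (simp add: mod_add_left_eq)
      also have "\<dots> = (j + N) mod N" using kk by (simp add: add.assoc)
      also have "\<dots> = j" using j by simp
      finally show "y t $ ((((j+k) mod N+k') mod N)*m+b) * y t $ (((j+k) mod N)*m+a) = y t $ (((j+k) mod N)*m+a) * y t $ (j*m+b)"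
        by simp
    qed
    finally show ?thesis .
  qed
  show ?thesis unfolding sample_cov_def using a b inner by simp
qed


lemma cov_eq:
  fixes Sig :: "real mat"
  assumes m: "m > 0" and Nn: "N > 2*n"
    and bc: "block_circulant m N S Sig" and Ss: "transpose_mat Sig = Sig"
    and Sh: "\<And>k. k \<le> n \<Longrightarrow> S k = sample_cov m N T y k"
    and k: "k < N" and a: "a < m" and b: "b < m"
    and nz: "recip_mat m N n M $$ (k*m+a, b) \<noteq> 0"
  shows "sample_cov m N T y k $$ (a,b) = S k $$ (a,b)"
proof (cases "k \<le> n")
  case True then show ?thesis using Sh by simp
next
  case False
  have N: "N > 0" using k by simp
  have r: "k*m+a < m*N" "(k*m+a) div m = k" "(k*m+a) mod m = a" using idx[OF k a] by auto
  have c: "b < m*N" "b div m = 0" "b mod m = b"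
    using b N m by (auto intro: less_le_trans[of _ m] simp: nat_mult_le_cancel_disj)
  have kmod: "int k mod int N = int k" using k by simp
  have "int k mod int N > int n" using kmod False by simp
  with nz have "(- int k) mod int N \<le> int n"
    unfolding recip_mat_def using r c by (auto simp: Let_def split: if_splits)
  moreover have "(- int k) mod int N = int N - int k"
    using False k by (simp add: zmod_zminus1_eq_if)
  ultimately have kn: "N - k \<le> n" by simp
  define k' where "k' = N - k"
  have kk: "k + k' = N" unfolding k'_def using k by simp
  have k'n: "k' \<le> n" unfolding k'_def using kn by simp
  have Sc: "Sig \<in> carrier_mat (m*N) (m*N)" using bc unfolding block_circulant_def by auto
  have e1: "Sig $$ (k*m+a, b) = S k $$ (a,b)"
    using bc r c k unfolding block_circulant_def by auto
  have e2: "Sig $$ (b, k*m+a) = S k' $$ (b,a)"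
  proof -
    have "(b div m + N - (k*m+a) div m) mod N = k'" using r c False kk k unfolding k'_def by simp
    then show ?thesis using bc r c unfolding block_circulant_def by auto
  qed
  have e3: "Sig $$ (k*m+a, b) = Sig $$ (b, k*m+a)"
    using Ss Sc r c by (metis carrier_matD index_transpose_mat(1))
  have "S k $$ (a,b) = sample_cov m N T y k' $$ (b,a)" using e1 e2 e3 Sh[OF k'n] by simp
  also have "\<dots> = sample_cov m N T y k $$ (a,b)" by (rule cov_sym[OF N kk a b])
  finally show ?thesis by simp
qed

lemma stats:
  fixes Sig :: "real mat" and M :: "nat \<Rightarrow> real mat"
  assumes m: "m > 0" and Nn: "N > 2*n" and T: "T > 0"
    and y: "\<And>t. t < T \<Longrightarrow> y t \<in> carrier_vec (m*N)"
    and bc: "block_circulant m N S Sig" and Ss: "transpose_mat Sig = Sig"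
    and Sh: "\<And>k. k \<le> n \<Longrightarrow> S k = sample_cov m N T y k"
  shows "(\<Sum>t<T. y t \<bullet> (recip_mat m N n M *\<^sub>v y t)) =
     real T * (\<Sum>r<m*N. \<Sum>c<m*N. recip_mat m N n M $$ (r,c) * Sig$$(r,c))"
proof -
  define A where "A = recip_mat m N n M"
  have N: "N > 0" using Nn by simp
  have Ac: "A \<in> carrier_mat (m*N) (m*N)" unfolding A_def recip_mat_def by simp
  define f where "f k a b = A $$ (k*m+a, b)" for k a b
  have circ: "A$$(r,c) = f ((r div m + N - c div m) mod N) (r mod m) (c mod m)" if "r < m*N" "c < m*N" for r c
    unfolding f_def A_def by (rule recip_circ[OF m that])
  have "(\<Sum>t<T. y t \<bullet> (A *\<^sub>v y t)) = (\<Sum>r<m*N. \<Sum>c<m*N. A$$(r,c) * (\<Sum>t<T. y t $ r * y t $ c))"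
    by (rule quad_sum[OF Ac y])
  also have "\<dots> = (\<Sum>k<N. \<Sum>a<m. \<Sum>b<m. f k a b * (\<Sum>j<N. \<Sum>t<T. y t $ (((j+k) mod N)*m+a) * y t $ (j*m+b)))"
    by (rule circ_sum[OF N m circ])
  also have "\<dots> = (\<Sum>k<N. \<Sum>a<m. \<Sum>b<m. f k a b * (real N * real T * sample_cov m N T y k $$ (a,b)))"
    using cov_inner[OF N T] by (intro sum.cong refl) simp
  also have "\<dots> = (\<Sum>k<N. \<Sum>a<m. \<Sum>b<m. real T * (f k a b * (real N * S k $$ (a,b))))"
  proof (intro sum.cong refl)
    fix k a b assume "k \<in> {..<N}" "a \<in> {..<m}" "b \<in> {..<m}"
    then have k: "k < N" and a: "a < m" and b: "b < m" by auto
    show "f k a b * (real N * real T * sample_cov m N T y k $$ (a,b)) = real T * (f k a b * (real N * S k $$ (a,b)))"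
    proof (cases "f k a b = 0")
      case False
      then have "sample_cov m N T y k $$ (a,b) = S k $$ (a,b)"
        using cov_eq[OF m Nn bc Ss Sh k a b] unfolding f_def A_def by blast
      then show ?thesis by simp
    qed simp
  qed
  also have "\<dots> = real T * (\<Sum>k<N. \<Sum>a<m. \<Sum>b<m. f k a b * (\<Sum>j<N. Sig$$(((j+k) mod N)*m+a, j*m+b)))"
    using sig_inner[OF bc] by (simp add: sum_distrib_left)
  also have "(\<Sum>k<N. \<Sum>a<m. \<Sum>b<m. f k a b * (\<Sum>j<N. Sig$$(((j+k) mod N)*m+a, j*m+b))) =
      (\<Sum>r<m*N. \<Sum>c<m*N. A$$(r,c) * Sig$$(r,c))"
    by (rule circ_sum[OF N m circ, symmetric])
  finally show ?thesis unfolding A_def .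
qed



lemma recip_at:
  fixes M :: "nat \<Rightarrow> real mat"
  assumes "k \<le> n" "n < N" "a < m" "b < m"
  shows "recip_mat m N n M $$ (k*m+a, b) = M k $$ (a,b)"
proof -
  have k: "k < N" using assms by simp
  have r: "k*m+a < m*N" "(k*m+a) div m = k" "(k*m+a) mod m = a" using idx[OF k assms(3)] by auto
  have N: "N > 0" using k by simp
  have c: "b < m*N" "b div m = 0" "b mod m = b"
    using assms N by (auto intro: less_le_trans[of _ m] simp: nat_mult_le_cancel_disj)
  have "int k mod int N = int k" using k by simp
  then show ?thesis unfolding recip_mat_def using r c assms by (simp add: Let_def)
qed

lemma recip_sym:
  fixes M :: "nat \<Rightarrow> real mat"
  assumes Nn: "N > 2*n" and M0: "transpose_mat (M 0) = M 0" and M0c: "M 0 \<in> carrier_mat m m"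
  shows "transpose_mat (recip_mat m N n M) = recip_mat m N n M"
proof (rule eq_matI)
  fix r c assume rc: "r < dim_row (recip_mat m N n M)" "c < dim_col (recip_mat m N n M)"
  then have r: "r < m*N" and c: "c < m*N" by (auto simp: recip_mat_def)
  have m: "m > 0" using r by (cases m) auto
  define x where "x = int (r div m) - int (c div m)"
  have mx: "int (c div m) - int (r div m) = - x" unfolding x_def by simp
  have N: "N > 0" using Nn by simp
  have ab: "r mod m < m" "c mod m < m" using m by auto
  have M0s: "M 0 $$ (i,j) = M 0 $$ (j,i)" if "i < m" "j < m" for i j
    using M0 M0c that by (metis carrier_matD index_transpose_mat(1))
  have bothcase: "M (nat (x mod int N)) $$ (r mod m, c mod m) = M (nat ((- x) mod int N)) $$ (c mod m, r mod m)"
    if "x mod int N \<le> int n" "(- x) mod int N \<le> int n"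
  proof (cases "x mod int N = 0")
    case True
    then have "(- x) mod int N = 0" by (simp add: zmod_zminus1_eq_if)
    then show ?thesis using True M0s ab by simp
  next
    case False
    then have "(- x) mod int N = int N - x mod int N" by (simp add: zmod_zminus1_eq_if)
    then show ?thesis using that Nn by simp
  qed
  have e1: "recip_mat m N n M $$ (r,c) = (if x mod int N \<le> int n then M (nat (x mod int N)) $$ (r mod m, c mod m)
     else if (- x) mod int N \<le> int n then M (nat ((- x) mod int N)) $$ (c mod m, r mod m) else 0)"
    unfolding recip_mat_def using r c by (simp add: Let_def x_def)
  have e2: "recip_mat m N n M $$ (c,r) = (if (- x) mod int N \<le> int n then M (nat ((- x) mod int N)) $$ (c mod m, r mod m)
     else if x mod int N \<le> int n then M (nat (x mod int N)) $$ (r mod m, c mod m) else 0)"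
    unfolding recip_mat_def using r c by (simp add: Let_def x_def)
  show "transpose_mat (recip_mat m N n M) $$ (r,c) = recip_mat m N n M $$ (r,c)"
    using rc e1 e2 bothcase by (auto simp: recip_mat_def)
qed (auto simp: recip_mat_def)


lemma recip_entry:
  fixes M :: "nat \<Rightarrow> real mat"
  assumes r: "r < m*N" and c: "c < m*N"
  shows "recip_mat m N n M $$ (r,c) =
    (if (r div m + N - c div m) mod N \<le> n then M ((r div m + N - c div m) mod N) $$ (r mod m, c mod m)
     else if (c div m + N - r div m) mod N \<le> n then M ((c div m + N - r div m) mod N) $$ (c mod m, r mod m)
     else 0)"
proof -
  have m: "m > 0" using r by (cases m) auto
  have i: "r div m < N" using r m by (simp add: less_mult_imp_div_less mult.commute)
  have j: "c div m < N" using c m by (simp add: less_mult_imp_div_less mult.commute)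
  show ?thesis unfolding recip_mat_def using r c int_mod_nat[OF i j] int_mod_nat[OF j i]
    by (simp add: Let_def)
qed

lemma recip_Sinv:
  fixes Sinv :: "real mat"
  assumes m: "m > 0" and Nn: "N > 2*n" and Sc: "Sinv \<in> carrier_mat (m*N) (m*N)"
    and Ss: "transpose_mat Sinv = Sinv" and bc: "block_circulant m N Q Sinv" and bd: "banded m N n Sinv"
  shows "recip_mat m N n (\<lambda>k. if k \<le> n then block_of m Sinv k else 0\<^sub>m m m) = Sinv"
proof (rule eq_matI)
  fix r c assume rc: "r < dim_row Sinv" "c < dim_col Sinv"
  then have r: "r < m*N" and c: "c < m*N" using Sc by auto
  define i where "i = r div m"
  define j where "j = c div m"
  define k1 where "k1 = (i + N - j) mod N"
  define k2 where "k2 = (j + N - i) mod N"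
  have N: "N > 0" using Nn by simp
  have k1: "k1 < N" "k2 < N" unfolding k1_def k2_def using N by auto
  have ab: "r mod m < m" "c mod m < m" using m by auto
  have Sr: "Sinv $$ (r,c) = Q k1 $$ (r mod m, c mod m)"
    using bc r c unfolding block_circulant_def k1_def i_def j_def by auto
  have Srev: "Sinv $$ (c,r) = Q k2 $$ (c mod m, r mod m)"
    using bc r c unfolding block_circulant_def k2_def i_def j_def by auto
  have sym: "Sinv $$ (r,c) = Sinv $$ (c,r)"
    using Ss Sc r c by (metis carrier_matD index_transpose_mat(1))
  have blk: "block_of m Sinv k $$ (a,b) = Q k $$ (a,b)" if "k < N" "a < m" "b < m" for k a b
  proof -
    have rr: "k*m+a < m*N" "(k*m+a) div m = k" "(k*m+a) mod m = a" using idx[OF that(1,2)] by auto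
    have cc: "b < m*N" "b div m = 0" "b mod m = b"
      using that N by (auto intro: less_le_trans[of _ m] simp: nat_mult_le_cancel_disj)
    show ?thesis unfolding block_of_def using that rr cc bc unfolding block_circulant_def by auto
  qed
  have e: "recip_mat m N n (\<lambda>k. if k \<le> n then block_of m Sinv k else 0\<^sub>m m m) $$ (r,c) =
     (if k1 \<le> n then (if k1 \<le> n then block_of m Sinv k1 else 0\<^sub>m m m) $$ (r mod m, c mod m)
      else if k2 \<le> n then (if k2 \<le> n then block_of m Sinv k2 else 0\<^sub>m m m) $$ (c mod m, r mod m) else 0)"
    unfolding k1_def k2_def i_def j_def by (rule recip_entry[OF r c])
  show "recip_mat m N n (\<lambda>k. if k \<le> n then block_of m Sinv k else 0\<^sub>m m m) $$ (r,c) = Sinv $$ (r,c)"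
  proof (cases "k1 \<le> n")
    case True
    then show ?thesis using e Sr blk[OF k1(1) ab] by simp
  next
    case F1: False
    show ?thesis
    proof (cases "k2 \<le> n")
      case True
      then show ?thesis using F1 e Srev sym blk[OF k1(2) ab(2,1)] by simp
    next
      case False
      have "cyc_dist N i j > n" unfolding cyc_dist_def using F1 False k1_def k2_def by simp
      then have "Sinv $$ (r,c) = 0" using bd r c unfolding banded_def i_def j_def by auto
      then show ?thesis using e F1 False by simp
    qed
  qed
qed (use Sc in \<open>auto simp: recip_mat_def\<close>)


lemma lik_formula:
  fixes M :: "nat \<Rightarrow> real mat" and Sig :: "real mat"
  assumes q: "(\<Sum>t<T. y t \<bullet> (recip_mat m N n M *\<^sub>v y t)) = real T * \<tau>"
  shows "likelihood m N n T y M =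
     ((2 * pi) powr (- real (m*N) / 2) * sqrt (det (recip_mat m N n M) * exp (- \<tau>)))^T"
proof -
  define A where "A = recip_mat m N n M"
  define c0 where "c0 = (2 * pi) powr (- real (m*N) / 2)"
  have "likelihood m N n T y M = (\<Prod>t<T. (c0 * sqrt (det A)) * exp (- (1/2) * (y t \<bullet> (A *\<^sub>v y t))))"
    unfolding likelihood_def gauss_density_def A_def c0_def by simp
  also have "\<dots> = (c0 * sqrt (det A))^T * exp (\<Sum>t<T. - (1/2) * (y t \<bullet> (A *\<^sub>v y t)))"
    by (simp add: prod.distrib exp_sum)
  also have "(\<Sum>t<T. - (1/2) * (y t \<bullet> (A *\<^sub>v y t))) = - (1/2) * (\<Sum>t<T. y t \<bullet> (A *\<^sub>v y t))"
    by (rule sum_distrib_left[symmetric])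
  also have "\<dots> = real T * (- \<tau> / 2)"
    using q unfolding A_def by simp
  also have "exp (real T * (- \<tau> / 2)) = exp (- \<tau> / 2) ^ T" by (rule exp_of_nat_mult)
  also have "exp (- \<tau> / 2) = sqrt (exp (- \<tau>))"
  proof -
    have "(exp (- \<tau> / 2))^2 = exp (- \<tau>)" by (simp add: power2_eq_square exp_add[symmetric])
    then show ?thesis by (intro real_sqrt_unique[symmetric]) auto
  qed
  finally show ?thesis unfolding A_def c0_def by (simp add: power_mult_distrib real_sqrt_mult mult_ac)
qed


theorem theorem4:
  fixes m n N T :: nat and y :: "nat \<Rightarrow> real vec" and Sig Sinv :: "real mat"
  assumes "m \<ge> 1" "n \<ge> 1" "N > 2*n" "T \<ge> 1"
    and "\<And>t. t < T \<Longrightarrow> y t \<in> carrier_vec (m*N)"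
    and "band_ext_solution m N n (sample_cov m N T y) Sig Sinv"
  shows "{M. (\<forall>k>n. M k = 0\<^sub>m m m) \<and> admissible m N n M \<and>
             (\<forall>M'. admissible m N n M' \<longrightarrow> likelihood m N n T y M' \<le> likelihood m N n T y M)}
         = {\<lambda>k. if k \<le> n then block_of m Sinv k else 0\<^sub>m m m}"
proof -
  have m: "m > 0" using assms(1) by simp
  have Nn: "N > 2*n" by fact
  have N: "N > 0" using Nn by simp
  have T: "T > 0" using assms(4) by simp
  have y: "\<And>t. t < T \<Longrightarrow> y t \<in> carrier_vec (m*N)" by fact
  define d where "d = m*N"
  have Sigs: "transpose_mat Sig = Sig" and Sigp: "pos_def_mat d Sig"
    and Sinvc: "Sinv \<in> carrier_mat d d" and SS: "Sig * Sinv = 1\<^sub>m d"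
    and bd: "banded m N n Sinv"
    using assms(6) unfolding band_ext_solution_def d_def by auto
  obtain S where Sh: "\<And>k. k \<le> n \<Longrightarrow> S k = sample_cov m N T y k" and bcS: "block_circulant m N S Sig"
    using assms(6) unfolding band_ext_solution_def by auto
  obtain Q where bcQ: "block_circulant m N Q Sinv"
    using assms(6) unfolding band_ext_solution_def by auto
  have Sigc: "Sig \<in> carrier_mat d d" using Sigp unfolding pos_def_mat_def by auto
  have SS2: "Sinv * Sig = 1\<^sub>m d" by (rule mat_mult_left_right_inverse[OF Sigc Sinvc SS])
  have Sinvs: "transpose_mat Sinv = Sinv"
  proof -
    have "transpose_mat (Sig * Sinv) = transpose_mat Sinv * transpose_mat Sig"
      by (rule transpose_mult[OF Sigc Sinvc])
    then have 1: "transpose_mat Sinv * Sig = 1\<^sub>m d" using SS Sigs by simp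
    have "transpose_mat Sinv = transpose_mat Sinv * (Sig * Sinv)" using SS Sinvc by simp
    also have "\<dots> = (transpose_mat Sinv * Sig) * Sinv"
      using Sinvc Sigc by (simp add: assoc_mult_mat[of _ d d Sig d Sinv d])
    also have "\<dots> = Sinv" using 1 Sinvc by simp
    finally show ?thesis .
  qed
  have Sinvp: "pos_def_mat d Sinv"
    unfolding pos_def_mat_def
  proof (intro conjI Sinvc ballI impI)
    fix x :: "real vec" assume x: "x \<in> carrier_vec d" "x \<noteq> 0\<^sub>v d"
    define w where "w = Sinv *\<^sub>v x"
    have wc: "w \<in> carrier_vec d" unfolding w_def using Sinvc x by simp
    have xw: "x = Sig *\<^sub>v w" unfolding w_def using SS Sinvc Sigc x
      by (simp add: assoc_mult_mat_vec[of Sig d d Sinv d x, symmetric])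
    have w0: "w \<noteq> 0\<^sub>v d"
    proof
      assume "w = 0\<^sub>v d"
      then have "x = 0\<^sub>v d" using xw Sigc by (intro eq_vecI) (auto simp: scalar_prod_def)
      then show False using x by simp
    qed
    have "x \<bullet> (Sinv *\<^sub>v x) = (Sig *\<^sub>v w) \<bullet> w" using xw unfolding w_def by simp
    also have "\<dots> = w \<bullet> (Sig *\<^sub>v w)"
      using transpose_vec_mult_scalar[OF Sigc wc wc] Sigs by simp
    finally show "x \<bullet> (Sinv *\<^sub>v x) > 0" using Sigp wc w0 unfolding pos_def_mat_def by simp
  qed
  define Mh where "Mh = (\<lambda>k. if k \<le> n then block_of m Sinv k else 0\<^sub>m m m)"
  have recMh: "recip_mat m N n Mh = Sinv"
    unfolding Mh_def by (rule recip_Sinv[OF m Nn Sinvc[unfolded d_def] Sinvs bcQ bd])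
  have admMh: "admissible m N n Mh"
    unfolding admissible_def
  proof (intro conjI allI impI)
    fix k assume "k \<le> n" then show "Mh k \<in> carrier_mat m m" unfolding Mh_def block_of_def by simp
  next
    show "transpose_mat (Mh 0) = Mh 0"
    proof (rule eq_matI)
      fix a b assume "a < dim_row (Mh 0)" "b < dim_col (Mh 0)"
      then have a: "a < m" and b: "b < m" unfolding Mh_def block_of_def by auto
      have ad: "a < d" "b < d" using a b N unfolding d_def
        by (auto intro: less_le_trans[of _ m] simp: nat_mult_le_cancel_disj)
      have "Sinv $$ (b,a) = Sinv $$ (a,b)"
        using Sinvs Sinvc ad by (metis carrier_matD index_transpose_mat(1))
      then show "transpose_mat (Mh 0) $$ (a,b) = Mh 0 $$ (a,b)"
        unfolding Mh_def block_of_def using a b by simp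
    qed (auto simp: Mh_def block_of_def)
  next
    show "pos_def_mat (m*N) (recip_mat m N n Mh)" using recMh Sinvp unfolding d_def by simp
  qed
  define \<tau> where "\<tau> A = (\<Sum>r<d. \<Sum>c<d. A $$ (r,c) * Sig $$ (r,c))" for A :: "real mat"
  define h where "h A = det A * exp (- \<tau> A)" for A :: "real mat"
  define c0 where "c0 = (2 * pi) powr (- real (m*N) / 2)"
  have c0: "c0 > 0" unfolding c0_def by simp
  have lik: "likelihood m N n T y M' = (c0 * sqrt (h (recip_mat m N n M')))^T" for M'
    unfolding c0_def h_def
    by (rule lik_formula) (unfold \<tau>_def d_def, rule stats[OF m Nn T y bcS Sigs Sh])
  have tauP: "\<tau> Sinv = real d"
  proof -
    have "\<tau> Sinv = (\<Sum>r<d. (Sinv * Sig) $$ (r,r))"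
      unfolding \<tau>_def
    proof (rule sum.cong[OF refl])
      fix r assume r: "r \<in> {..<d}"
      have "(Sinv * Sig) $$ (r,r) = (\<Sum>p<d. Sinv $$ (r,p) * Sig $$ (p,r))"
        using r by (intro mult_entry[OF Sinvc Sigc]) auto
      also have "\<dots> = (\<Sum>c<d. Sinv $$ (r,c) * Sig $$ (r,c))"
        using r Sigs Sigc by (intro sum.cong refl) (metis carrier_matD index_transpose_mat(1) lessThan_iff)
      finally show "(\<Sum>c<d. Sinv $$ (r,c) * Sig $$ (r,c)) = (Sinv * Sig) $$ (r,r)" by simp
    qed
    also have "\<dots> = real d" using SS2 by simp
    finally show ?thesis .
  qed
  have detP: "det Sinv * det Sig = 1"
    using det_mult[OF Sinvc Sigc] SS2 by simp
  have detSig: "det Sig > 0"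
  proof -
    have "det Sig \<noteq> 0" by (rule pd_det_nonzero[OF Sigp])
    obtain U where Uc: "U \<in> carrier_mat d d" and SU: "Sig = transpose_mat U * U"
      using chol[OF Sigc Sigs Sigp] by blast
    have "det Sig = det U * det U"
      unfolding SU using det_mult[of "transpose_mat U" d U] det_transpose[OF Uc] Uc by simp
    then have "det Sig \<ge> 0" by simp
    with \<open>det Sig \<noteq> 0\<close> show ?thesis by simp
  qed
  have cmp: "h A \<le> h Sinv \<and> (h A = h Sinv \<longrightarrow> A = Sinv)" if adm: "admissible m N n M'" and A: "A = recip_mat m N n M'" for M' A
  proof -
    have Ac: "A \<in> carrier_mat d d" unfolding A d_def recip_mat_def by simp
    have As: "transpose_mat A = A"
      unfolding A using adm unfolding admissible_def by (intro recip_sym[OF Nn]) auto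
    have Ap: "pos_def_mat d A" using adm unfolding A admissible_def d_def by simp
    have K: "det A * det Sig \<le> exp (\<tau> A - real d)"
         "det A * det Sig = exp (\<tau> A - real d) \<Longrightarrow> A * Sig = 1\<^sub>m d"
      using key[OF Ac Sigc As Sigs Ap Sigp] unfolding \<tau>_def by auto
    have hP: "h Sinv * det Sig = exp (- real d)" unfolding h_def tauP using detP
      by (simp add: mult_ac)
    have hA: "h A * det Sig = (det A * det Sig) * exp (- \<tau> A)" unfolding h_def by (simp add: mult_ac)
    have "(det A * det Sig) * exp (- \<tau> A) \<le> exp (\<tau> A - real d) * exp (- \<tau> A)"
      using K(1) by (intro mult_right_mono) auto
    also have "\<dots> = exp (- real d)" by (simp add: exp_add[symmetric])
    finally have le0: "(det A * det Sig) * exp (- \<tau> A) \<le> exp (- real d)" .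
    have le: "h A * det Sig \<le> h Sinv * det Sig" unfolding hA hP by (rule le0)
    then have 1: "h A \<le> h Sinv" using detSig by simp
    have 2: "A = Sinv" if eq: "h A = h Sinv"
    proof -
      have "(det A * det Sig) * exp (- \<tau> A) = exp (\<tau> A - real d) * exp (- \<tau> A)"
        using eq hA hP by (simp add: exp_add[symmetric])
      then have "det A * det Sig = exp (\<tau> A - real d)" by simp
      then have AS: "A * Sig = 1\<^sub>m d" by (rule K(2))
      have "A = A * (Sig * Sinv)" using SS Ac by simp
      also have "\<dots> = (A * Sig) * Sinv" using Ac Sigc Sinvc by (simp add: assoc_mult_mat[of A d d Sig d Sinv d])
      also have "\<dots> = Sinv" using AS Sinvc by simp
      finally show ?thesis .
    qed
    show ?thesis using 1 2 by blast
  qed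
  have inj: "M = Mh" if adm: "admissible m N n M" and z: "\<forall>k>n. M k = 0\<^sub>m m m" and rM: "recip_mat m N n M = Sinv" for M
  proof
    fix k show "M k = Mh k"
    proof (cases "k \<le> n")
      case False then show ?thesis using z unfolding Mh_def by simp
    next
      case True
      have Mc: "M k \<in> carrier_mat m m" using adm True unfolding admissible_def by auto
      show ?thesis
      proof (rule eq_matI)
        fix a b assume "a < dim_row (Mh k)" "b < dim_col (Mh k)"
        then have a: "a < m" and b: "b < m" using True unfolding Mh_def block_of_def by auto
        have "M k $$ (a,b) = recip_mat m N n M $$ (k*m+a, b)"
          using recip_at[OF True _ a b] Nn by simp
        also have "\<dots> = Sinv $$ (k*m+a, b)" using rM by simp
        finally show "M k $$ (a,b) = Mh k $$ (a,b)" unfolding Mh_def block_of_def using True a b by simp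
      qed (use Mc True in \<open>auto simp: Mh_def block_of_def\<close>)
    qed
  qed
  have hnn: "0 \<le> h (recip_mat m N n M')" if adm: "admissible m N n M'" for M'
  proof -
    define A where "A = recip_mat m N n M'"
    have Ap: "pos_def_mat d A" using adm unfolding A_def admissible_def d_def by simp
    have Ac: "A \<in> carrier_mat d d" using Ap unfolding pos_def_mat_def by simp
    have As: "transpose_mat A = A"
      unfolding A_def using adm unfolding admissible_def by (intro recip_sym[OF Nn]) auto
    obtain U where Uc: "U \<in> carrier_mat d d" and AU: "A = transpose_mat U * U"
      using chol[OF Ac As Ap] by blast
    have "det A = det U * det U"
      unfolding AU using det_mult[of "transpose_mat U" d U] det_transpose[OF Uc] Uc by simp
    then show ?thesis unfolding h_def A_def[symmetric] by simp
  qed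
  let ?Set = "{M. (\<forall>k>n. M k = 0\<^sub>m m m) \<and> admissible m N n M \<and>
             (\<forall>M'. admissible m N n M' \<longrightarrow> likelihood m N n T y M' \<le> likelihood m N n T y M)}"
  have sub1: "M = Mh" if "M \<in> ?Set" for M
  proof -
    from that have z: "\<forall>k>n. M k = 0\<^sub>m m m" and adm: "admissible m N n M"
      and mx: "likelihood m N n T y Mh \<le> likelihood m N n T y M" using admMh by auto
    define A where "A = recip_mat m N n M"
    have c: "h A \<le> h Sinv \<and> (h A = h Sinv \<longrightarrow> A = Sinv)" by (rule cmp[OF adm A_def])
    have "(c0 * sqrt (h Sinv))^T \<le> (c0 * sqrt (h A))^T" using mx lik recMh unfolding A_def by metis
    moreover have "T = Suc (T - 1)" using T by simp
    ultimately have "(c0 * sqrt (h Sinv)) ^ Suc (T - 1) \<le> (c0 * sqrt (h A)) ^ Suc (T - 1)" by metis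
    moreover have "0 \<le> c0 * sqrt (h A)" using hnn[OF adm] c0 unfolding A_def by simp
    ultimately have "c0 * sqrt (h Sinv) \<le> c0 * sqrt (h A)" by (rule power_le_imp_le_base)
    then have "h Sinv \<le> h A" using c0 by simp
    then have "A = Sinv" using c by simp
    then show "M = Mh" using inj[OF adm z] unfolding A_def by simp
  qed
  have sub2: "Mh \<in> ?Set"
  proof -
    have "likelihood m N n T y M' \<le> likelihood m N n T y Mh" if adm: "admissible m N n M'" for M'
    proof -
      have "h (recip_mat m N n M') \<le> h Sinv" using cmp[OF adm refl] by simp
      then have "c0 * sqrt (h (recip_mat m N n M')) \<le> c0 * sqrt (h Sinv)" using c0 by simp
      then have "(c0 * sqrt (h (recip_mat m N n M')))^T \<le> (c0 * sqrt (h Sinv))^T"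
        by (rule power_mono) (use c0 hnn[OF adm] in \<open>auto\<close>)
      then show ?thesis using lik recMh by metis
    qed
    moreover have "\<forall>k>n. Mh k = 0\<^sub>m m m" unfolding Mh_def by simp
    ultimately show ?thesis using admMh by auto
  qed
  have "?Set = {Mh}" using sub1 sub2 by blast
  then show ?thesis unfolding Mh_def .
qed

end
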